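(* Let $k\ge r\ge3$ and $p,t\ge0$ be integers and let $\pi\in\mathbb{C}_{<}(k,r|p,t)$ be such that $\pi^{(2)}_p=2t+2$ and $\pi^{(2)}_p$ is of starting type $s_3$. Let $p_1$ be the smallest integer with $1\le p_1\le p$ such that $\pi^{(2)}_{p_1}=\pi^{(2)}_{p}+4(p-p_1)$ and $\pi^{(2)}_{p},\pi^{(2)}_{p-1},\dots,\pi^{(2)}_{p_1}$ are all of the same starting type. Then the integer $\pi^{(2)}_{p_1}+4$ occurs at most once as a part of $\pi$.
   Context: A partition $\pi=(\pi_1,\dots,\pi_\ell)$ is a finite non-increasing sequence of positive integers; "$a$ occurs in $\pi$" means $a=\pi_i$ for some $i$. Göllnitz–Gordon marking: $GG(\pi)$ assigns a positive integer (mark) to each part, processing the parts from smallest to largest; $\pi_i$ receives the smallest positive integer different from the marks of all parts $\pi_g$ with $g>i$ and $\pi_i-\pi_g\le 2$, where $\pi_i-\pi_g<2$ is required when $\pi_i$ is odd. An "$r$-marked part $a$" is a part equal to $a$ with mark $r$. $N_i(\pi)$ is the number of parts with mark $i$; $\pi^{(i)}_1\ge\dots\ge\pi^{(i)}_{N_i(\pi)}$ are the parts with mark $i$, with $\pi^{(i)}_0=+\infty$, $\pi^{(i)}_{N_i(\pi)+1}=-\infty$. $\mathbb{C}(k,r)$: partitions with (i) no odd part repeated; (ii) $\pi_i\ge\pi_{i+k-1}+2$ for $1\le i\le\ell-k+1$, strict if $\pi_i$ even; (iii) at most $r-1$ parts $\le 2$. Starting types: for $\pi\in\mathbb{C}(k,r)$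 with $N_2=N_2(\pi)\ge1$, let $l$ be the largest integer in $\{0,\dots,N_2\}$ such that no odd part of $\pi$ is $\ge\pi^{(2)}_l$; for $l<i\le N_2$, $\pi^{(2)}_i$ has type $s_{-1}$. For $b=1,\dots,l$ in increasing order, type and auxiliary $\sigma_b$: for $b=1$: Case 1: 1-marked part $\pi^{(2)}_1-1$ exists and $\pi^{(2)}_1+2$ does not occur: type $s_0$, $\sigma_1=\pi^{(2)}_1-1$; Case 2: 1-marked $\pi^{(2)}_1-2$ exists and $\pi^{(2)}_1+2$ does not occur: type $s_1$, $\sigma_1=\pi^{(2)}_1-2$; Case 3: 1-marked $\pi^{(2)}_1+2$ exists: type $s_2$, $\sigma_1=\pi^{(2)}_1+2$; Case 4: 1-marked $\pi^{(2)}_1$ exists: type $s_3$, $\sigma_1=\pi^{(2)}_1$. For $2\le b\le l$: Case 1: 1-marked $\pi^{(2)}_b-1$ exists and, if a 1-marked $\pi^{(2)}_b+2$ exists, $\sigma_{b-1}=\pi^{(2)}_b+2$: type $s_0$, $\sigma_b=\pi^{(2)}_b-1$; Case 2: same with $\pi^{(2)}_b-2$: type $s_1$, $\sigma_b=\pi^{(2)}_b-2$; Case 3: 1-marked $\pi^{(2)}_b+2$ exists and $\sigma_{b-1}\ne\pi^{(2)}_b+2$: type $s_2$, $\sigma_b=\pi^{(2)}_b+2$; Case 4: 1-marked $\pi^{(2)}_b$ exists: type $s_3$, $\sigma_b=\pi^{(2)}_b$. $\mathbb{C}_{<}(k,r|p,t)$: the set of $\pi\in\mathbb{C}(k,r)$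 such that (1) no odd part is $\ge 2t+1$; (2) $\pi^{(2)}_{p+1}<2t+1<\pi^{(2)}_p$ (in particular $p\le N_2(\pi)$); (3) if $\pi^{(2)}_p=2t+2$ then it is of starting type $s_2$ or $s_3$; (4) if $\pi^{(2)}_{p+1}=2t$ then it is of starting type $s_0$ or $s_1$. The index $p_1$ in the claim is what the paper calls the first starting cluster index of $\pi$. *)

theory Defs
  imports Main "HOL-Library.Extended_Real"
begin

text \<open>Partitions are lists of positive naturals in non-increasing order,
  index 0 of the list being the largest part pi_1.\<close>

definition is_partition :: "nat list \<Rightarrow> bool" where
  "is_partition \<pi> \<longleftrightarrow> sorted_wrt (\<ge>) \<pi> \<and> (\<forall>a\<in>set \<pi>. 0 < a)"

text \<open>Goellnitz-Gordon marking: list of marks aligned with the parts.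
  The mark of the head is computed from the marks of the (smaller) tail parts.\<close>

fun gg :: "nat list \<Rightarrow> nat list" where
  "gg [] = []"
| "gg (x # xs) =
     (let ms = gg xs in
      (LEAST m::nat. 0 < m \<and>
         m \<notin> {ms ! g | g. g < length xs \<and> int x - int (xs ! g) \<le> 2 \<and>
                     (odd x \<longrightarrow> int x - int (xs ! g) < 2)}) # ms)"

definition markparts :: "nat list \<Rightarrow> nat \<Rightarrow> nat list" where
  "markparts \<pi> i = [\<pi> ! j. j \<leftarrow> [0..<length \<pi>], gg \<pi> ! j = i]"

definition Nmark :: "nat list \<Rightarrow> nat \<Rightarrow> nat" where
  "Nmark \<pi> i = length (markparts \<pi> i)"

text \<open>pi^(i)_j as an integer (meaningful for 1 <= j <= N_i).\<close>
definition mp :: "nat list \<Rightarrow> nat \<Rightarrow> nat \<Rightarrow> int" where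
  "mp \<pi> i j = int (markparts \<pi> i ! (j - 1))"

definition mpx :: "nat list \<Rightarrow> nat \<Rightarrow> nat \<Rightarrow> ereal" where
  "mpx \<pi> i j = (if j = 0 then \<infinity> else if j \<le> Nmark \<pi> i then ereal (real_of_int (mp \<pi> i j))
                 else -\<infinity>)"

definition occurs :: "nat list \<Rightarrow> int \<Rightarrow> bool" where
  "occurs \<pi> a \<longleftrightarrow> (\<exists>x\<in>set \<pi>. int x = a)"

definition marked :: "nat list \<Rightarrow> nat \<Rightarrow> int \<Rightarrow> bool" where
  "marked \<pi> r a \<longleftrightarrow> (\<exists>j<length \<pi>. int (\<pi> ! j) = a \<and> gg \<pi> ! j = r)"

definition CC :: "nat \<Rightarrow> nat \<Rightarrow> nat list \<Rightarrow> bool" where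
  "CC k r \<pi> \<longleftrightarrow> is_partition \<pi>
     \<and> (\<forall>a. odd a \<longrightarrow> count_list \<pi> a \<le> 1)
     \<and> (\<forall>i. i + k - 1 < length \<pi> \<longrightarrow>
            \<pi> ! i \<ge> \<pi> ! (i + k - 1) + 2 \<and> (even (\<pi> ! i) \<longrightarrow> \<pi> ! i > \<pi> ! (i + k - 1) + 2))
     \<and> length (filter (\<lambda>a. a \<le> 2) \<pi>) \<le> r - 1"

datatype stype = Sm1 | S0 | S1 | S2 | S3

definition lidx :: "nat list \<Rightarrow> nat" where
  "lidx \<pi> = (GREATEST l. l \<le> Nmark \<pi> 2 \<and>
       (\<forall>a\<in>set \<pi>. odd a \<longrightarrow> ereal (real a) < mpx \<pi> 2 l))"

text \<open>Type and auxiliary sigma_b for b = 1,2,... (cases tried in the order 1,2,3,4).\<close>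
fun stc :: "nat list \<Rightarrow> nat \<Rightarrow> (stype \<times> int) option" where
  "stc \<pi> 0 = None"
| "stc \<pi> (Suc b) =
     (let x = mp \<pi> 2 (Suc b); one = marked \<pi> 1 in
      if b = 0 then
        (if one (x - 1) \<and> \<not> occurs \<pi> (x + 2) then Some (S0, x - 1)
         else if one (x - 2) \<and> \<not> occurs \<pi> (x + 2) then Some (S1, x - 2)
         else if one (x + 2) then Some (S2, x + 2)
         else if one x then Some (S3, x)
         else None)
      else
        (case stc \<pi> b of None \<Rightarrow> None
         | Some (_, \<sigma>) \<Rightarrow>
            (if one (x - 1) \<and> (one (x + 2) \<longrightarrow> \<sigma> = x + 2) then Some (S0, x - 1)
             else if one (x - 2) \<and> (one (x + 2) \<longrightarrow> \<sigma> = x + 2) then Some (S1, x - 2)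
             else if one (x + 2) \<and> \<sigma> \<noteq> x + 2 then Some (S2, x + 2)
             else if one x then Some (S3, x)
             else None)))"

definition stype_of :: "nat list \<Rightarrow> nat \<Rightarrow> stype option" where
  "stype_of \<pi> b = (if 1 \<le> b \<and> b \<le> Nmark \<pi> 2 then
       (if lidx \<pi> < b then Some Sm1 else map_option fst (stc \<pi> b))
     else None)"

definition CCless :: "nat \<Rightarrow> nat \<Rightarrow> nat \<Rightarrow> nat \<Rightarrow> nat list \<Rightarrow> bool" where
  "CCless k r p t \<pi> \<longleftrightarrow> CC k r \<pi>
     \<and> (\<forall>a\<in>set \<pi>. odd a \<longrightarrow> a < 2 * t + 1)
     \<and> mpx \<pi> 2 (p + 1) < ereal (real (2 * t + 1)) \<and> ereal (real (2 * t + 1)) < mpx \<pi> 2 p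
     \<and> (mpx \<pi> 2 p = ereal (real (2 * t + 2)) \<longrightarrow> stype_of \<pi> p \<in> {Some S2, Some S3})
     \<and> (mpx \<pi> 2 (p + 1) = ereal (real (2 * t)) \<longrightarrow> stype_of \<pi> (p + 1) \<in> {Some S0, Some S1})"

end

theory Submission
  imports Defs
begin
lemma length_gg[simp]: "length (gg xs) = length xs"
  by (induction xs) (auto simp: Let_def)

lemma shift_set: "{f g | g. (j::nat) < g \<and> g < Suc n \<and> P g} = {f (Suc g) | g. j < Suc g \<and> g < n \<and> P (Suc g)}"
proof (rule set_eqI, rule iffI)
  fix y assume "y \<in> {f g | g. j < g \<and> g < Suc n \<and> P g}"
  then obtain g where g: "y = f g" "j < g" "g < Suc n" "P g" by blast
  then obtain h where h: "g = Suc h" using gr0_conv_Suc by (metis less_nat_zero_code not0_implies_Suc)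
  show "y \<in> {f (Suc g) | g. j < Suc g \<and> g < n \<and> P (Suc g)}" using g h by auto
next
  fix y assume "y \<in> {f (Suc g) | g. j < Suc g \<and> g < n \<and> P (Suc g)}"
  then show "y \<in> {f g | g. j < g \<and> g < Suc n \<and> P g}" by auto
qed

lemma gs: "gg (x#xs) ! Suc g = gg xs ! g" by (simp only: gg.simps Let_def nth_Cons_Suc)

definition win :: "nat list \<Rightarrow> nat \<Rightarrow> nat \<Rightarrow> bool" where
  "win xs j g \<longleftrightarrow> int (xs!j) - int (xs!g) \<le> 2 \<and> (odd (xs!j) \<longrightarrow> int (xs!j) - int (xs!g) < 2)"

lemma gg_nth: "j < length xs \<Longrightarrow> gg xs ! j =
  (LEAST m::nat. 0 < m \<and> m \<notin> {gg xs ! g | g. j < g \<and> g < length xs \<and> win xs j g})"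
proof (induction xs arbitrary: j)
  case Nil then show ?case by simp
next
  case (Cons x xs)
  have S: "{gg (x#xs) ! g | g. j < g \<and> g < length (x#xs) \<and> win (x#xs) j g}
     = {gg xs ! g | g. j < Suc g \<and> g < length xs \<and> win (x#xs) j (Suc g)}"
    using shift_set[of "\<lambda>g. gg (x#xs) ! g" j "length xs" "win (x#xs) j"] by (simp only: gs length_Cons)
  show ?case
  proof (cases j)
    case 0
    have W: "\<And>g. win (x#xs) 0 (Suc g) = (int x - int (xs ! g) \<le> 2 \<and>
                     (odd x \<longrightarrow> int x - int (xs ! g) < 2))"
      by (simp only: win_def nth_Cons_0 nth_Cons_Suc)
    have E: "{gg xs ! g | g. g < length xs \<and> int x - int (xs ! g) \<le> 2 \<and>
                     (odd x \<longrightarrow> int x - int (xs ! g) < 2)}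
        = {gg (x#xs) ! g | g. j < g \<and> g < length (x#xs) \<and> win (x#xs) j g}"
      unfolding 0 unfolding S[unfolded 0] W by simp
    have H: "gg (x#xs) ! 0 = (LEAST m::nat. 0 < m \<and> m \<notin> {gg xs ! g | g. g < length xs \<and> int x - int (xs ! g) \<le> 2 \<and>
                     (odd x \<longrightarrow> int x - int (xs ! g) < 2)})" by (simp only: gg.simps Let_def nth_Cons_0)
    show ?thesis unfolding 0 H E[unfolded 0] ..
  next
    case (Suc j')
    then have j': "j' < length xs" using Cons by simp
    have W: "\<And>g. win (x#xs) (Suc j') (Suc g) = win xs j' g"
      by (simp only: win_def nth_Cons_Suc)
    have E: "{gg xs ! g | g. j' < g \<and> g < length xs \<and> win xs j' g}
        = {gg (x#xs) ! g | g. j < g \<and> g < length (x#xs) \<and> win (x#xs) j g}"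
      unfolding Suc unfolding S[unfolded Suc] W by simp
    show ?thesis unfolding Suc gs Cons.IH[OF j'] E[unfolded Suc] ..
  qed
qed
lemma gg_ex: "\<exists>m::nat. 0 < m \<and> m \<notin> {gg xs ! g | g. j < g \<and> g < length xs \<and> win xs j g}"
proof -
  have "finite (insert 0 {gg xs ! g | g. j < g \<and> g < length xs \<and> win xs j g})"
    by (rule finite_insert[THEN iffD2], rule finite_subset[of _ "(\<lambda>g. gg xs ! g) ` {..<length xs}"]) auto
  then obtain m where "m \<notin> insert 0 {gg xs ! g | g. j < g \<and> g < length xs \<and> win xs j g}"
    using ex_new_if_finite infinite_UNIV_nat by blast
  then show ?thesis by auto
qed

lemma gg_prop: assumes "j < length xs"
  shows "0 < gg xs ! j \<and> gg xs ! j \<notin> {gg xs ! g | g. j < g \<and> g < length xs \<and> win xs j g}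
    \<and> (\<forall>m. 0 < m \<and> m < gg xs ! j \<longrightarrow> m \<in> {gg xs ! g | g. j < g \<and> g < length xs \<and> win xs j g})"
proof -
  obtain S where S: "S = {gg xs ! g | g. j < g \<and> g < length xs \<and> win xs j g}" by blast
  have e: "gg xs ! j = (LEAST m::nat. 0 < m \<and> m \<notin> S)" using gg_nth[OF assms] S by blast
  have ex: "\<exists>m::nat. 0 < m \<and> m \<notin> S" using gg_ex S by blast
  have "0 < gg xs ! j \<and> gg xs ! j \<notin> S" unfolding e by (rule LeastI_ex[OF ex])
  moreover have "\<forall>m. 0 < m \<and> m < gg xs ! j \<longrightarrow> m \<in> S"
    unfolding e using not_less_Least by blast
  ultimately show ?thesis using S by blast
qed

lemma gg_pos: "j < length xs \<Longrightarrow> 0 < gg xs ! j"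
  using gg_prop by blast

lemma gg_neq: "j < g \<Longrightarrow> g < length xs \<Longrightarrow> win xs j g \<Longrightarrow> gg xs ! g \<noteq> gg xs ! j"
  using gg_prop[of j xs] by auto

lemma gg_min: "j < length xs \<Longrightarrow> 0 < m \<Longrightarrow> m < gg xs ! j \<Longrightarrow>
   \<exists>g. j < g \<and> g < length xs \<and> win xs j g \<and> gg xs ! g = m"
  using gg_prop[of j xs] by auto

lemma comp_filter: "[f x. x \<leftarrow> xs, P x] = map f (filter P xs)"
  by (induction xs) auto

lemma markparts_eq: "markparts \<pi> i = map (nth \<pi>) (filter (\<lambda>j. gg \<pi> ! j = i) [0..<length \<pi>])"
  unfolding markparts_def comp_filter ..

lemma set_markparts: "v \<in> set (markparts \<pi> i) \<longleftrightarrow> (\<exists>j<length \<pi>. \<pi> ! j = v \<and> gg \<pi> ! j = i)"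
  unfolding markparts_eq by auto

lemma sorted_nth: "is_partition \<pi> \<Longrightarrow> i \<le> j \<Longrightarrow> j < length \<pi> \<Longrightarrow> \<pi> ! j \<le> \<pi> ! i"
  unfolding is_partition_def
  by (metis le_eq_less_or_eq order_refl sorted_wrt_iff_nth_less)

lemma idx_lt: "is_partition \<pi> \<Longrightarrow> i < length \<pi> \<Longrightarrow> \<pi> ! j < \<pi> ! i \<Longrightarrow> i < j"
  using sorted_nth[of \<pi> j i] by (cases "j \<le> i") auto

lemma markparts_strict: assumes "is_partition \<pi>" "a < b" "b < length (markparts \<pi> i)"
  shows "markparts \<pi> i ! b < markparts \<pi> i ! a"
proof -
  define I where "I = filter (\<lambda>j. gg \<pi> ! j = i) [0..<length \<pi>]"
  have L: "markparts \<pi> i = map (nth \<pi>) I" unfolding I_def markparts_eq ..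
  have sI: "sorted_wrt (<) I" unfolding I_def by (rule sorted_wrt_filter) (simp add: sorted_wrt_upt)
  have b: "b < length I" using assms L by simp
  have ab: "I ! a < I ! b" using sI b assms(2) by (simp add: sorted_wrt_iff_nth_less)
  have ia: "I ! a \<in> set I" "I ! b \<in> set I" using b assms(2) by auto
  then have g: "gg \<pi> ! (I!a) = i" "gg \<pi> ! (I!b) = i" "I!b < length \<pi>" unfolding I_def by auto
  have le: "\<pi> ! (I!b) \<le> \<pi> ! (I!a)" using sorted_nth[OF assms(1)] ab g by simp
  have "\<pi> ! (I!b) \<noteq> \<pi> ! (I!a)"
  proof
    assume e: "\<pi> ! (I!b) = \<pi> ! (I!a)"
    have "win \<pi> (I!a) (I!b)" unfolding win_def using e by simp
    then show False using gg_neq[OF ab g(3)] g by simp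
  qed
  moreover have "markparts \<pi> i ! b = \<pi> ! (I!b)" "markparts \<pi> i ! a = \<pi> ! (I!a)"
    unfolding L using b assms(2) by auto
  ultimately show ?thesis using le by simp
qed

lemma stc_S3_elim: "stc \<pi> (Suc b) = Some (S3, s) \<Longrightarrow> marked \<pi> 1 (mp \<pi> 2 (Suc b))"
  by (simp add: Let_def split: if_split_asm option.split_asm prod.split_asm)

lemma stc_prev: "stc \<pi> (Suc (Suc b)) \<noteq> None \<Longrightarrow> stc \<pi> (Suc b) \<noteq> None"
  by (subst (asm) stc.simps(2)) (simp add: Let_def del: stc.simps split: if_split_asm option.split_asm prod.split_asm)

lemma stc_S3_intro: assumes "b = 0 \<or> stc \<pi> b \<noteq> None"
  "\<not> marked \<pi> 1 (mp \<pi> 2 (Suc b) - 1)" "\<not> marked \<pi> 1 (mp \<pi> 2 (Suc b) - 2)"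
  "\<not> marked \<pi> 1 (mp \<pi> 2 (Suc b) + 2)" "marked \<pi> 1 (mp \<pi> 2 (Suc b))"
  shows "stc \<pi> (Suc b) = Some (S3, mp \<pi> 2 (Suc b))"
proof (cases "b = 0")
  case True then show ?thesis using assms by (simp add: Let_def)
next
  case False
  then obtain a \<sigma> where "stc \<pi> b = Some (a, \<sigma>)" using assms(1) by auto
  then show ?thesis using assms False by (subst stc.simps(2)) (simp add: Let_def del: stc.simps)
qed

lemma two_idx: assumes "1 < length (filter P xs)"
  shows "\<exists>i1 i2. i1 < i2 \<and> i2 < length xs \<and> P (xs!i1) \<and> P (xs!i2)"
proof -
  define A where "A = {i. i < length xs \<and> P (xs!i)}"
  have c: "1 < card A" using assms unfolding A_def length_filter_conv_card .
  have fA: "finite A" unfolding A_def by simp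
  obtain a where a: "a \<in> A" using c by (metis card.empty ex_in_conv not_less_zero)
  have "card (A - {a}) = card A - 1" using a fA by simp
  then have "0 < card (A - {a})" using c by simp
  then have "A - {a} \<noteq> {}" by (metis card.empty less_irrefl)
  then obtain b where b: "b \<in> A" "b \<noteq> a" by blast
  show ?thesis
  proof (cases "a < b")
    case True then show ?thesis using a b unfolding A_def by blast
  next
    case False then have "b < a" using b by simp
    then show ?thesis using a b unfolding A_def by blast
  qed
qed

theorem proposition2p7:
  fixes k r p t p1 :: nat and \<pi> :: "nat list"
  assumes "3 \<le> r" and "r \<le> k"
    and "CCless k r p t \<pi>"
    and "mpx \<pi> 2 p = ereal (real (2 * t + 2))"
    and "stype_of \<pi> p = Some S3"
    and "1 \<le> p1" and "p1 \<le> p"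
    and "mp \<pi> 2 p1 = mp \<pi> 2 p + 4 * int (p - p1)"
    and "\<forall>j\<in>{p1..p}. stype_of \<pi> j = stype_of \<pi> p"
    and "\<forall>q. 1 \<le> q \<and> q < p1 \<longrightarrow>
           \<not> (mp \<pi> 2 q = mp \<pi> 2 p + 4 * int (p - q) \<and>
              (\<forall>j\<in>{q..p}. stype_of \<pi> j = stype_of \<pi> p))"
  shows "length (filter (\<lambda>a. int a = mp \<pi> 2 p1 + 4) \<pi>) \<le> 1"
proof (rule ccontr)
  assume neg: "\<not> ?thesis"
  define L where "L = markparts \<pi> 2"
  have CC: "CC k r \<pi>" and oddp: "\<forall>a\<in>set \<pi>. odd a \<longrightarrow> a < 2*t+1"
    using assms(3) unfolding CCless_def by blast+
  have part: "is_partition \<pi>" using CC unfolding CC_def by blast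
  have p0: "p \<noteq> 0" using assms(6,7) by simp
  have pN: "p \<le> Nmark \<pi> 2"
  proof (rule ccontr)
    assume "\<not> p \<le> Nmark \<pi> 2"
    then have "mpx \<pi> 2 p = -\<infinity>" using p0 unfolding mpx_def by simp
    then show False using assms(4) by simp
  qed
  have "mpx \<pi> 2 p = ereal (real_of_int (mp \<pi> 2 p))" using p0 pN unfolding mpx_def by simp
  then have "real_of_int (mp \<pi> 2 p) = real (2*t+2)" using assms(4) by simp
  then have mpp: "mp \<pi> 2 p = int (2*t+2)" by linarith
  have p1L: "p1 - 1 < length L" using pN assms(6,7) unfolding L_def Nmark_def by simp
  define xn where "xn = L ! (p1-1)"
  have x_int: "mp \<pi> 2 p1 = int xn" by (simp add: mp_def xn_def L_def)
  have xn_eq: "xn = 2*t+2+4*(p-p1)" using assms(8) mpp x_int by simp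
  have xeven: "even xn" using xn_eq by simp
  have odd_lt: "\<And>i. i < length \<pi> \<Longrightarrow> odd (\<pi>!i) \<Longrightarrow> \<pi>!i < 2*t+1" using oddp nth_mem by blast
  have no_odd: "\<And>i. i < length \<pi> \<Longrightarrow> \<pi>!i \<noteq> xn+1 \<and> \<pi>!i \<noteq> xn+3"
  proof -
    fix i assume i: "i < length \<pi>"
    show "\<pi>!i \<noteq> xn+1 \<and> \<pi>!i \<noteq> xn+3"
    proof (rule ccontr)
      assume "\<not> (\<pi>!i \<noteq> xn+1 \<and> \<pi>!i \<noteq> xn+3)"
      then have "\<pi>!i = xn+1 \<or> \<pi>!i = xn+3" by blast
      then have "odd (\<pi>!i)" "\<pi>!i \<ge> xn" using xeven by auto
      then show False using odd_lt[OF i] xn_eq by fastforce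
    qed
  qed
  have xn_mem: "xn \<in> set (markparts \<pi> 2)" using p1L unfolding xn_def L_def by simp
  obtain j2 where j2: "j2 < length \<pi>" "\<pi>!j2 = xn" "gg \<pi> ! j2 = 2"
    using xn_mem unfolding set_markparts by blast
  have p1N: "p1 \<le> Nmark \<pi> 2" using pN assms(7) by simp
  have st1: "stype_of \<pi> p1 = Some S3" using assms(9,5,6,7) by auto
  have lid: "\<not> lidx \<pi> < p1" and stc1: "map_option fst (stc \<pi> p1) = Some S3"
    using st1 p1N assms(6) unfolding stype_of_def by (auto split: if_splits)
  obtain \<sigma> where stcp1: "stc \<pi> p1 = Some (S3, \<sigma>)" using stc1 by (cases "stc \<pi> p1") auto
  have p1S: "p1 = Suc (p1 - 1)" using assms(6) by simp
  have "marked \<pi> 1 (mp \<pi> 2 (Suc (p1-1)))" using stc_S3_elim[of \<pi> "p1-1" \<sigma>] stcp1 p1S by simp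
  then have "marked \<pi> 1 (int xn)" using p1S x_int by simp
  then obtain j1 where j1: "j1 < length \<pi>" "\<pi>!j1 = xn" "gg \<pi> ! j1 = 1"
    unfolding marked_def by auto
  have x2: "\<And>i. i < length \<pi> \<Longrightarrow> \<pi>!i = xn+2 \<Longrightarrow> 3 \<le> gg \<pi> ! i"
  proof -
    fix i assume i: "i < length \<pi>" "\<pi>!i = xn+2"
    have a1: "i < j1" by (rule idx_lt[OF part i(1)]) (simp add: j1 i)
    have a2: "i < j2" by (rule idx_lt[OF part i(1)]) (simp add: j2 i)
    have "win \<pi> i j1" "win \<pi> i j2" unfolding win_def using i j1 j2 xeven by auto
    then have "gg \<pi> ! j1 \<noteq> gg \<pi> ! i" "gg \<pi> ! j2 \<noteq> gg \<pi> ! i"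
      using gg_neq a1 a2 j1(1) j2(1) by blast+
    moreover have "0 < gg \<pi> ! i" using gg_pos i(1) by blast
    ultimately show "3 \<le> gg \<pi> ! i" using j1 j2 by linarith
  qed
  have copies: "\<And>i m. i < length \<pi> \<Longrightarrow> \<pi>!i = xn+4 \<Longrightarrow> 0 < m \<Longrightarrow> m \<le> 2 \<Longrightarrow> m < gg \<pi> ! i
      \<Longrightarrow> \<exists>g<length \<pi>. \<pi>!g = xn+4 \<and> gg \<pi> ! g = m"
  proof -
    fix i m assume i: "i < length \<pi>" "\<pi>!i = xn+4" and m: "0 < m" "m \<le> 2" "m < gg \<pi> ! i"
    obtain g where g: "i < g" "g < length \<pi>" "win \<pi> i g" "gg \<pi> ! g = m"
      using gg_min[OF i(1) m(1) m(3)] by blast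
    have le: "\<pi>!g \<le> \<pi>!i" using sorted_nth[OF part, of i g] g by simp
    have ge: "\<pi>!g \<ge> xn+2" using g(3) i(2) unfolding win_def by simp
    have "\<pi>!g \<noteq> xn+2" using x2[OF g(2)] g(4) m by auto
    moreover have "\<pi>!g \<noteq> xn+3" using no_odd[OF g(2)] by blast
    ultimately have "\<pi>!g = xn+4" using le ge i(2) by simp
    then show "\<exists>g<length \<pi>. \<pi>!g = xn+4 \<and> gg \<pi> ! g = m" using g by blast
  qed
  have "1 < length (filter (\<lambda>a. int a = mp \<pi> 2 p1 + 4) \<pi>)" using neg by simp
  then obtain i1 i2 where ii: "i1 < i2" "i2 < length \<pi>" "int (\<pi>!i1) = mp \<pi> 2 p1 + 4" "int (\<pi>!i2) = mp \<pi> 2 p1 + 4"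
    using two_idx[of "\<lambda>a. int a = mp \<pi> 2 p1 + 4" \<pi>] by blast
  have i1v: "\<pi>!i1 = xn+4" and i2v: "\<pi>!i2 = xn+4" using ii(3,4) x_int by simp_all
  have i1l: "i1 < length \<pi>" using ii by simp
  have "win \<pi> i1 i2" unfolding win_def using i1v i2v by simp
  then have gi: "gg \<pi> ! i2 \<noteq> gg \<pi> ! i1" using gg_neq ii(1,2) by blast
  have "0 < gg \<pi> ! i1" "0 < gg \<pi> ! i2" using gg_pos i1l ii(2) by blast+
  then have "\<exists>i<length \<pi>. \<pi>!i = xn+4 \<and> 2 \<le> gg \<pi> ! i"
    using gi i1v i2v i1l ii(2) by (metis One_nat_def Suc_1 Suc_leI antisym_conv2 less_one linorder_not_le)
  then obtain i where i: "i < length \<pi>" "\<pi>!i = xn+4" "2 \<le> gg \<pi> ! i" by blast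
  obtain J1 where J1: "J1 < length \<pi>" "\<pi>!J1 = xn+4" "gg \<pi> ! J1 = 1"
    using copies[OF i(1,2), of 1] i(3) by auto
  obtain J2 where J2: "J2 < length \<pi>" "\<pi>!J2 = xn+4" "gg \<pi> ! J2 = 2"
  proof (cases "gg \<pi> ! i = 2")
    case True then show ?thesis using that i by blast
  next
    case False then show ?thesis using that copies[OF i(1,2), of 2] i(3) by auto
  qed
  have "xn+4 \<in> set L" unfolding L_def set_markparts using J2 by blast
  then obtain q0 where q0: "q0 < length L" "L!q0 = xn+4" by (metis in_set_conv_nth)
  have strict: "\<And>a b. a < b \<Longrightarrow> b < length L \<Longrightarrow> L!b < L!a"
    unfolding L_def using markparts_strict[OF part] by blast
  have q0lt: "q0 < p1-1"
  proof (rule ccontr)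
    assume "\<not> q0 < p1-1"
    then have "q0 = p1-1 \<or> p1-1 < q0" by auto
    then show False
    proof
      assume "q0 = p1-1" then show False using q0 xn_def by simp
    next
      assume "p1-1 < q0" then have "L!q0 < L!(p1-1)" using strict q0(1) by blast
      then show False using q0 xn_def by simp
    qed
  qed
  have p12: "2 \<le> p1" using q0lt by simp
  have q0eq: "q0 = p1-2"
  proof (rule ccontr)
    assume "q0 \<noteq> p1-2"
    then have "q0 < p1-2" using q0lt by simp
    define v where "v = L!(p1-2)"
    have "v < L!q0" unfolding v_def using strict \<open>q0 < p1-2\<close> p1L p12 by simp
    moreover have "L!(p1-1) < v" unfolding v_def using strict p1L p12 by simp
    moreover have "v \<in> set (markparts \<pi> 2)" unfolding v_def L_def[symmetric] using p1L by simp
    then obtain j where j: "j < length \<pi>" "\<pi>!j = v" "gg \<pi> ! j = 2" unfolding set_markparts by blast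
    ultimately have "xn < \<pi>!j" "\<pi>!j < xn+4" using q0 xn_def by auto
    then have "\<pi>!j = xn+1 \<or> \<pi>!j = xn+2 \<or> \<pi>!j = xn+3" by auto
    then show False using no_odd[OF j(1)] x2[OF j(1)] j(3) by auto
  qed
  have qS: "p1 - 1 = Suc (p1-2)" using p12 by simp
  have mpq: "mp \<pi> 2 (Suc (p1-2)) = int xn + 4"
    using q0 q0eq qS p12 unfolding mp_def L_def by (simp add: numeral_eq_Suc)
  have n3: "\<not> marked \<pi> 1 (int xn + 4 - 1)"
  proof
    assume "marked \<pi> 1 (int xn + 4 - 1)"
    then obtain j where "j < length \<pi>" "int (\<pi>!j) = int xn + 4 - 1" unfolding marked_def by blast
    then show False using no_odd by fastforce
  qed
  have n2: "\<not> marked \<pi> 1 (int xn + 4 - 2)"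
  proof
    assume "marked \<pi> 1 (int xn + 4 - 2)"
    then obtain j where "j < length \<pi>" "int (\<pi>!j) = int xn + 4 - 2" "gg \<pi> ! j = 1" unfolding marked_def by blast
    then show False using x2 by fastforce
  qed
  have n6: "\<not> marked \<pi> 1 (int xn + 4 + 2)"
  proof
    assume "marked \<pi> 1 (int xn + 4 + 2)"
    then obtain j where j: "j < length \<pi>" "int (\<pi>!j) = int xn + 4 + 2" "gg \<pi> ! j = 1" unfolding marked_def by blast
    have jv: "\<pi>!j = xn + 6" using j(2) by simp
    have "j < J1" by (rule idx_lt[OF part j(1)]) (simp add: jv J1)
    moreover have "win \<pi> j J1" unfolding win_def using jv J1 xeven by simp
    ultimately have "gg \<pi> ! J1 \<noteq> gg \<pi> ! j" using gg_neq J1(1) by blast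
    then show False using j(3) J1(3) by simp
  qed
  have y4: "marked \<pi> 1 (int xn + 4)" unfolding marked_def using J1 by auto
  have prev: "p1 - 2 = 0 \<or> stc \<pi> (p1-2) \<noteq> None"
  proof (cases "p1 - 2")
    case 0 then show ?thesis by simp
  next
    case (Suc b')
    have e: "p1 = Suc (Suc (Suc b'))" using Suc p12 by simp
    have "stc \<pi> (Suc (Suc (Suc b'))) \<noteq> None" using stcp1 e by simp
    then have "stc \<pi> (Suc (Suc b')) \<noteq> None" by (rule stc_prev)
    then have "stc \<pi> (Suc b') \<noteq> None" by (rule stc_prev)
    then show ?thesis using Suc by simp
  qed
  have stq0: "stc \<pi> (Suc (p1-2)) = Some (S3, mp \<pi> 2 (Suc (p1-2)))"
    by (rule stc_S3_intro[OF prev]) (simp_all only: mpq n3 n2 n6 y4 not_False_eq_True)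
  have stq: "stype_of \<pi> (p1-1) = Some S3"
  proof -
    have a: "\<not> lidx \<pi> < Suc (p1-2)" "Suc (p1-2) \<le> Nmark \<pi> 2" using lid p1N p12 by auto
    have "stype_of \<pi> (Suc (p1-2)) = Some S3"
      unfolding stype_of_def using stq0 a by (simp del: stc.simps)
    then show ?thesis using qS by simp
  qed
  have c1: "mp \<pi> 2 (p1-1) = mp \<pi> 2 p + 4 * int (p - (p1-1))"
    using mpq qS assms(8) x_int p12 assms(7) by simp
  have c2: "\<forall>j\<in>{p1-1..p}. stype_of \<pi> j = stype_of \<pi> p"
  proof
    fix j assume "j \<in> {p1-1..p}"
    then have "j = p1-1 \<or> j \<in> {p1..p}" by auto
    then show "stype_of \<pi> j = stype_of \<pi> p" using stq assms(5,9) by auto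
  qed
  have "1 \<le> p1-1 \<and> p1-1 < p1" using p12 by simp
  then show False using assms(10)[rule_format, of "p1-1"] c1 c2 by blast
qed

end
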